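(* Let $k\ge4$ be an integer. Every $k$-ring contains a hole of length $k$.
   Context: Graphs are finite and simple. A hole is an induced cycle on at least four vertices; its length is its number of vertices. For $k\ge4$, a $k$-ring is a graph $R$ whose vertex set can be partitioned into nonempty sets $X_0,\dots,X_{k-1}$ (indices in $\mathbb{Z}_k$) such that for each $i$, $X_i$ can be ordered as $u^i_1,\dots,u^i_{|X_i|}$ so that $X_i\subseteq N_R[u^i_{|X_i|}]\subseteq\dots\subseteq N_R[u^i_1]=X_{i-1}\cup X_i\cup X_{i+1}$, where $N_R[v]$ denotes the closed neighbourhood of $v$. *)

theory Defs
  imports Main
begin

definition simple_graph :: "'a set \<Rightarrow> ('a \<Rightarrow> 'a \<Rightarrow> bool) \<Rightarrow> bool" where
  "simple_graph V E \<longleftrightarrow> finite V \<and> (\<forall>x y. E x y \<longrightarrow> E y x) \<and> (\<forall>x. \<not> E x x)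
     \<and> (\<forall>x y. E x y \<longrightarrow> x \<in> V \<and> y \<in> V)"

definition closed_nbhd :: "'a set \<Rightarrow> ('a \<Rightarrow> 'a \<Rightarrow> bool) \<Rightarrow> 'a \<Rightarrow> 'a set" where
  "closed_nbhd V E v = {w \<in> V. E v w} \<union> {v}"

definition has_hole_of_length :: "'a set \<Rightarrow> ('a \<Rightarrow> 'a \<Rightarrow> bool) \<Rightarrow> nat \<Rightarrow> bool" where
  "has_hole_of_length V E k \<longleftrightarrow> k \<ge> 4 \<and>
     (\<exists>cs. length cs = k \<and> distinct cs \<and> set cs \<subseteq> V \<and>
        (\<forall>i<k. \<forall>j<k. E (cs!i) (cs!j) \<longleftrightarrow> (j = (i+1) mod k \<or> i = (j+1) mod k)))"

text \<open>A k-ring: V partitioned into nonempty X 0, ..., X (k-1) (indices mod k), each X i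
  ordered as a list us (u_1, ..., u_m) with
  X i \<subseteq> N[u_m] \<subseteq> ... \<subseteq> N[u_1] = X(i-1) \<union> X i \<union> X(i+1).\<close>
definition is_ring :: "'a set \<Rightarrow> ('a \<Rightarrow> 'a \<Rightarrow> bool) \<Rightarrow> nat \<Rightarrow> bool" where
  "is_ring V E k \<longleftrightarrow> k \<ge> 4 \<and>
     (\<exists>X :: nat \<Rightarrow> 'a set.
        (\<forall>i<k. X i \<noteq> {}) \<and>
        (\<forall>i<k. \<forall>j<k. i \<noteq> j \<longrightarrow> X i \<inter> X j = {}) \<and>
        (\<Union>i<k. X i) = V \<and>
        (\<forall>i<k. \<exists>us. distinct us \<and> set us = X i \<and>
            X i \<subseteq> closed_nbhd V E (last us) \<and>
            (\<forall>j. j + 1 < length us \<longrightarrow>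
                 closed_nbhd V E (us ! (j+1)) \<subseteq> closed_nbhd V E (us ! j)) \<and>
            closed_nbhd V E (hd us) = X ((i + k - 1) mod k) \<union> X i \<union> X ((i + 1) mod k)))"

end

theory Submission
  imports Defs
begin

lemma modsuc:
  fixes j k :: nat
  assumes "j < k"
  shows "(j + 1) mod k = (if j + 1 = k then 0 else j + 1)"
  using assms by auto

lemma modpred:
  fixes i k :: nat
  assumes "i < k"
  shows "(i + k - 1) mod k = (if i = 0 then k - 1 else i - 1)"
proof (cases "i = 0")
  case True then show ?thesis using assms by simp
next
  case False
  then have "i + k - 1 = (i - 1) + k" by simp
  then have "(i + k - 1) mod k = (i - 1) mod k" by simp
  then show ?thesis using False assms by simp
qed

lemma modlem:
  fixes i j k :: nat
  assumes "i < k" "j < k" "k \<ge> 2"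
  shows "(j = (i + k - 1) mod k) \<longleftrightarrow> (i = (j + 1) mod k)"
  unfolding modpred[OF assms(1)] modsuc[OF assms(2)] using assms by auto

theorem proposition6p4:
  fixes V :: "'a set" and E :: "'a \<Rightarrow> 'a \<Rightarrow> bool" and k :: nat
  assumes "k \<ge> 4"
    and "simple_graph V E"
    and "is_ring V E k"
  shows "has_hole_of_length V E k"
proof -
  obtain X :: "nat \<Rightarrow> 'a set" where
    ne: "\<forall>i<k. X i \<noteq> {}" and dj: "\<forall>i<k. \<forall>j<k. i \<noteq> j \<longrightarrow> X i \<inter> X j = {}"
    and un: "(\<Union>i<k. X i) = V" and
    ex: "\<forall>i<k. \<exists>us. distinct us \<and> set us = X i \<and>
            X i \<subseteq> closed_nbhd V E (last us) \<and>
            (\<forall>j. j + 1 < length us \<longrightarrow>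
                 closed_nbhd V E (us ! (j+1)) \<subseteq> closed_nbhd V E (us ! j)) \<and>
            closed_nbhd V E (hd us) = X ((i + k - 1) mod k) \<union> X i \<union> X ((i + 1) mod k)"
    using assms(3) unfolding is_ring_def by blast
  obtain us where us: "\<And>i. i < k \<Longrightarrow> set (us i) = X i \<and>
       closed_nbhd V E (hd (us i)) = X ((i + k - 1) mod k) \<union> X i \<union> X ((i + 1) mod k)"
    using ex by metis
  define c where "c i = hd (us i)" for i
  have cX: "c i \<in> X i" if "i < k" for i
    using us[OF that] ne that unfolding c_def by (metis hd_in_set set_empty)
  have cV: "c i \<in> V" if "i < k" for i using cX[OF that] un that by blast
  have memX: "c j \<in> X m \<longleftrightarrow> j = m" if "j < k" "m < k" for j m
    using cX dj that by blast
  have sg: "\<forall>x y. E x y \<longrightarrow> E y x" "\<forall>x. \<not> E x x" "\<forall>x y. E x y \<longrightarrow> x \<in> V \<and> y \<in> V"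
    using assms(2) unfolding simple_graph_def by auto
  have Ec: "E (c i) (c j) \<longleftrightarrow> (j = (i+1) mod k \<or> i = (j+1) mod k)" if "i < k" "j < k" for i j
  proof -
    have "i \<noteq> j \<Longrightarrow> c j \<noteq> c i" using cX[OF that(1)] memX[OF that(2) that(1)] by auto
    then have "E (c i) (c j) \<longleftrightarrow> c j \<in> closed_nbhd V E (c i) \<and> i \<noteq> j"
      using sg cV that cX memX unfolding closed_nbhd_def by auto
    also have "\<dots> \<longleftrightarrow> (j = (i + k - 1) mod k \<or> j = i \<or> j = (i+1) mod k) \<and> i \<noteq> j"
      using us[OF that(1)] memX[OF that(2)] that assms(1) unfolding c_def[symmetric]
      by auto
    also have "\<dots> \<longleftrightarrow> (j = (i+1) mod k \<or> i = (j+1) mod k)"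
    proof -
      have "j = (i+1) mod k \<Longrightarrow> i \<noteq> j" using that assms(1)
        unfolding modsuc[OF that(1)] by auto
      moreover have "i = (j+1) mod k \<Longrightarrow> i \<noteq> j" using that assms(1)
        unfolding modsuc[OF that(2)] by auto
      ultimately show ?thesis using modlem[OF that] assms(1) by auto
    qed
    finally show ?thesis .
  qed
  define cs where "cs = map c [0..<k]"
  have "length cs = k" unfolding cs_def by simp
  moreover have "distinct cs" unfolding cs_def distinct_map
    using memX cX by (auto simp: inj_on_def) metis
  moreover have "set cs \<subseteq> V" unfolding cs_def using cV by auto
  moreover have "\<forall>i<k. \<forall>j<k. E (cs!i) (cs!j) \<longleftrightarrow> (j = (i+1) mod k \<or> i = (j+1) mod k)"
    unfolding cs_def using Ec by simp
  ultimately show ?thesis unfolding has_hole_of_length_def using assms(1) by blast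
qed

end
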